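(* Let $A\to B$ be a homomorphism of $\mathbb{Z}$-algebras, and let $Q_j=\bigoplus_iB_{ij}$ ($j\in\mathbb{Z}$) be the indecomposable projective $B$-modules. Assume that $A$ is coherent and that all $Q_j$ are coherent as $A$-modules (via the homomorphism). Then $B$ is a coherent $\mathbb{Z}$-algebra.
   Context: $k$ is a fixed field. A $\mathbb{Z}$-algebra is an associative $k$-algebra $A=\bigoplus_{i\le j}A_{ij}$ ($i,j\in\mathbb{Z}$) with $A_{ii}=k$, only nonzero multiplication components $A_{jk}\otimes A_{ij}\to A_{ik}$, with $A_{jj}\otimes A_{ij}\to A_{ij}$ and $A_{ij}\otimes A_{ii}\to A_{ij}$ the identity maps; it is assumed $\dim_kA_{ij}<\infty$. A homomorphism of $\mathbb{Z}$-algebras respects the components $A_{ij}\to B_{ij}$. An $A$-module is a graded right module $M=\bigoplus_iM_i$ with action $M_j\otimes A_{ij}\to M_i$ ($M_i\otimes A_{ii}\to M_i$ the identity). $P_j=\bigoplus_iA_{ij}$; $S_j$ is the module with $(S_j)_j=k$, $(S_j)_i=0$ otherwise; $\mathcal{P}$ is the class of finite direct sums of $P_j$'s. $M$ is finitely generated if it is a quotient of some $P\in\mathcal{P}$; $M$ is coherent if it is finitely generated and for every $f:P\to M$ with $P\in\mathcal{P}$, $\ker f$ is finitely generated. $A$ is coherent (meaning right coherent) if all $P_j$ and all $S_j$ are coherent. *)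

theory Defs
  imports Complex_Main "HOL-Library.Function_Algebras"
begin

text \<open>A Z-algebra is represented by its homogeneous components A_ij, realised as
  k-subspaces of an ambient k-vector space of type 'v (scalar multiplication zscale).
  The multiplication A_jk x A_ij -> A_ik is the indexed map  zmul i j k x y
  (x in A_jk, y in A_ij), and zone i spans A_ii = k.\<close>

record ('k, 'v) zalg =
  zscale :: "'k \<Rightarrow> 'v \<Rightarrow> 'v"
  zcomp  :: "int \<Rightarrow> int \<Rightarrow> 'v set"
  zmul   :: "int \<Rightarrow> int \<Rightarrow> int \<Rightarrow> 'v \<Rightarrow> 'v \<Rightarrow> 'v"
  zone   :: "int \<Rightarrow> 'v"

definition zalgebra :: "('k::field, 'v::ab_group_add) zalg \<Rightarrow> bool" where
  "zalgebra A \<longleftrightarrow>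
     vector_space (zscale A) \<and>
     (\<forall>i j. module.subspace (zscale A) (zcomp A i j)) \<and>
     (\<forall>i j. \<exists>S. finite S \<and> S \<subseteq> zcomp A i j \<and> module.span (zscale A) S = zcomp A i j) \<and>
     (\<forall>i j. j < i \<longrightarrow> zcomp A i j = {0}) \<and>
     (\<forall>i. zone A i \<noteq> 0 \<and> zcomp A i i = module.span (zscale A) {zone A i}) \<and>
     (\<forall>i j k x y. x \<in> zcomp A j k \<longrightarrow> y \<in> zcomp A i j \<longrightarrow> zmul A i j k x y \<in> zcomp A i k) \<and>
     (\<forall>i j k x x' y. x \<in> zcomp A j k \<longrightarrow> x' \<in> zcomp A j k \<longrightarrow> y \<in> zcomp A i j \<longrightarrow>
        zmul A i j k (x + x') y = zmul A i j k x y + zmul A i j k x' y) \<and>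
     (\<forall>i j k x y y'. x \<in> zcomp A j k \<longrightarrow> y \<in> zcomp A i j \<longrightarrow> y' \<in> zcomp A i j \<longrightarrow>
        zmul A i j k x (y + y') = zmul A i j k x y + zmul A i j k x y') \<and>
     (\<forall>i j k c x y. x \<in> zcomp A j k \<longrightarrow> y \<in> zcomp A i j \<longrightarrow>
        zmul A i j k (zscale A c x) y = zscale A c (zmul A i j k x y) \<and>
        zmul A i j k x (zscale A c y) = zscale A c (zmul A i j k x y)) \<and>
     (\<forall>i j k l x y z. x \<in> zcomp A k l \<longrightarrow> y \<in> zcomp A j k \<longrightarrow> z \<in> zcomp A i j \<longrightarrow>
        zmul A i k l x (zmul A i j k y z) = zmul A i j l (zmul A j k l x y) z) \<and>
     (\<forall>i j y. y \<in> zcomp A i j \<longrightarrow> zmul A i j j (zone A j) y = y \<and> zmul A i i j y (zone A i) = y)"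

definition zalg_hom :: "('k::field, 'v::ab_group_add) zalg \<Rightarrow> ('k, 'w::ab_group_add) zalg
    \<Rightarrow> (int \<Rightarrow> int \<Rightarrow> 'v \<Rightarrow> 'w) \<Rightarrow> bool" where
  "zalg_hom A B f \<longleftrightarrow>
     (\<forall>i j x. x \<in> zcomp A i j \<longrightarrow> f i j x \<in> zcomp B i j) \<and>
     (\<forall>i j x y. x \<in> zcomp A i j \<longrightarrow> y \<in> zcomp A i j \<longrightarrow> f i j (x + y) = f i j x + f i j y) \<and>
     (\<forall>i j c x. x \<in> zcomp A i j \<longrightarrow> f i j (zscale A c x) = zscale B c (f i j x)) \<and>
     (\<forall>i j k x y. x \<in> zcomp A j k \<longrightarrow> y \<in> zcomp A i j \<longrightarrow>
        f i k (zmul A i j k x y) = zmul B i j k (f j k x) (f i j y)) \<and>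
     (\<forall>i. f i i (zone A i) = zone B i)"

text \<open>A module M over A: components M_i are k-subspaces of a k-vector space of type 'm,
  the action M_j x A_ij -> M_i is  mact i j m a.\<close>

record ('k, 'v, 'm) zmod =
  mscale :: "'k \<Rightarrow> 'm \<Rightarrow> 'm"
  mcomp  :: "int \<Rightarrow> 'm set"
  mact   :: "int \<Rightarrow> int \<Rightarrow> 'm \<Rightarrow> 'v \<Rightarrow> 'm"

definition is_zmod :: "('k::field, 'v::ab_group_add) zalg \<Rightarrow> ('k, 'v, 'm::ab_group_add) zmod \<Rightarrow> bool" where
  "is_zmod A M \<longleftrightarrow>
     vector_space (mscale M) \<and>
     (\<forall>i. module.subspace (mscale M) (mcomp M i)) \<and>
     (\<forall>i j m a. m \<in> mcomp M j \<longrightarrow> a \<in> zcomp A i j \<longrightarrow> mact M i j m a \<in> mcomp M i) \<and>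
     (\<forall>i j m m' a. m \<in> mcomp M j \<longrightarrow> m' \<in> mcomp M j \<longrightarrow> a \<in> zcomp A i j \<longrightarrow>
        mact M i j (m + m') a = mact M i j m a + mact M i j m' a) \<and>
     (\<forall>i j m a a'. m \<in> mcomp M j \<longrightarrow> a \<in> zcomp A i j \<longrightarrow> a' \<in> zcomp A i j \<longrightarrow>
        mact M i j m (a + a') = mact M i j m a + mact M i j m a') \<and>
     (\<forall>i j c m a. m \<in> mcomp M j \<longrightarrow> a \<in> zcomp A i j \<longrightarrow>
        mact M i j (mscale M c m) a = mscale M c (mact M i j m a) \<and>
        mact M i j m (zscale A c a) = mscale M c (mact M i j m a)) \<and>
     (\<forall>i j k m y x. m \<in> mcomp M k \<longrightarrow> y \<in> zcomp A j k \<longrightarrow> x \<in> zcomp A i j \<longrightarrow>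
        mact M i j (mact M j k m y) x = mact M i k m (zmul A i j k y x)) \<and>
     (\<forall>j m. m \<in> mcomp M j \<longrightarrow> mact M j j m (zone A j) = m)"

definition zmod_hom :: "('k::field, 'v::ab_group_add) zalg \<Rightarrow> ('k, 'v, 'm::ab_group_add) zmod
    \<Rightarrow> ('k, 'v, 'n::ab_group_add) zmod \<Rightarrow> (int \<Rightarrow> 'm \<Rightarrow> 'n) \<Rightarrow> bool" where
  "zmod_hom A M N h \<longleftrightarrow>
     (\<forall>i m. m \<in> mcomp M i \<longrightarrow> h i m \<in> mcomp N i) \<and>
     (\<forall>i m m'. m \<in> mcomp M i \<longrightarrow> m' \<in> mcomp M i \<longrightarrow> h i (m + m') = h i m + h i m') \<and>
     (\<forall>i c m. m \<in> mcomp M i \<longrightarrow> h i (mscale M c m) = mscale N c (h i m)) \<and>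
     (\<forall>i j m a. m \<in> mcomp M j \<longrightarrow> a \<in> zcomp A i j \<longrightarrow> h i (mact M i j m a) = mact N i j (h j m) a)"

definition zproj :: "('k, 'v) zalg \<Rightarrow> int \<Rightarrow> ('k, 'v, 'v) zmod" where
  "zproj A j = \<lparr> mscale = zscale A, mcomp = (\<lambda>i. zcomp A i j),
                 mact = (\<lambda>i l m a. zmul A i l j m a) \<rparr>"

definition zsimple :: "('k, 'v::zero) zalg \<Rightarrow> int \<Rightarrow> ('k, 'v, 'v) zmod" where
  "zsimple A j = \<lparr> mscale = zscale A,
                   mcomp = (\<lambda>i. if i = j then zcomp A j j else {0}),
                   mact = (\<lambda>i l m a. if i = j \<and> l = j then zmul A j j j m a else 0) \<rparr>"

text \<open>The class \<P>: the finite direct sum P_(js!0) (+) ... (+) P_(js!(n-1)), realised on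
  functions nat => 'v vanishing outside {0..<length js}.\<close>

definition zpsum :: "('k, 'v::zero) zalg \<Rightarrow> int list \<Rightarrow> ('k, 'v, nat \<Rightarrow> 'v) zmod" where
  "zpsum A js = \<lparr> mscale = (\<lambda>c v t. zscale A c (v t)),
                  mcomp = (\<lambda>i. {v. (\<forall>t < length js. v t \<in> zcomp A i (js ! t)) \<and>
                                    (\<forall>t \<ge> length js. v t = 0)}),
                  mact = (\<lambda>i l v a t. if t < length js then zmul A i l (js ! t) (v t) a else 0) \<rparr>"

definition zker :: "('k, 'v, 'm) zmod \<Rightarrow> (int \<Rightarrow> 'm \<Rightarrow> 'n::zero) \<Rightarrow> ('k, 'v, 'm) zmod" where
  "zker M h = M \<lparr> mcomp := (\<lambda>i. {m \<in> mcomp M i. h i m = 0}) \<rparr>"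

definition fin_gen :: "('k::field, 'v::ab_group_add) zalg \<Rightarrow> ('k, 'v, 'm::ab_group_add) zmod \<Rightarrow> bool" where
  "fin_gen A M \<longleftrightarrow> (\<exists>js h. zmod_hom A (zpsum A js) M h \<and>
                              (\<forall>i. h i ` mcomp (zpsum A js) i = mcomp M i))"

definition coherent_mod :: "('k::field, 'v::ab_group_add) zalg \<Rightarrow> ('k, 'v, 'm::ab_group_add) zmod \<Rightarrow> bool" where
  "coherent_mod A M \<longleftrightarrow> fin_gen A M \<and>
     (\<forall>js h. zmod_hom A (zpsum A js) M h \<longrightarrow> fin_gen A (zker (zpsum A js) h))"

definition coherent_zalg :: "('k::field, 'v::ab_group_add) zalg \<Rightarrow> bool" where
  "coherent_zalg A \<longleftrightarrow> (\<forall>j. coherent_mod A (zproj A j) \<and> coherent_mod A (zsimple A j))"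

definition zrestrict :: "(int \<Rightarrow> int \<Rightarrow> 'v \<Rightarrow> 'w) \<Rightarrow> ('k, 'w, 'm) zmod \<Rightarrow> ('k, 'v, 'm) zmod" where
  "zrestrict f M = \<lparr> mscale = mscale M, mcomp = mcomp M,
                     mact = (\<lambda>i l m a. mact M i l m (f i l a)) \<rparr>"

end

theory Submission
  imports Defs
begin

context fixes A :: "('k::field,'v::ab_group_add) zalg" assumes zA: "zalgebra A"
begin
lemma za_vs: "vector_space (zscale A)" using zA by (simp add: zalgebra_def)
lemma za_mod: "module (zscale A)" using za_vs by (simp add: module_iff_vector_space)
lemma za_sub: "module.subspace (zscale A) (zcomp A i j)" using zA by (simp add: zalgebra_def)
lemma za_0[simp]: "0 \<in> zcomp A i j" using module.subspace_0[OF za_mod za_sub] .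
lemma za_add: "x \<in> zcomp A i j \<Longrightarrow> y \<in> zcomp A i j \<Longrightarrow> x + y \<in> zcomp A i j"
  using module.subspace_add[OF za_mod za_sub] .
lemma za_scale: "x \<in> zcomp A i j \<Longrightarrow> zscale A c x \<in> zcomp A i j"
  using module.subspace_scale[OF za_mod za_sub] .
lemma za_below: "j < i \<Longrightarrow> zcomp A i j = {0}" using zA by (simp add: zalgebra_def)
lemma za_one_ne: "zone A i \<noteq> 0" using zA by (simp add: zalgebra_def)
lemma za_diag: "zcomp A i i = range (\<lambda>c. zscale A c (zone A i))"
  using zA module.span_singleton[OF za_mod] by (simp add: zalgebra_def)
lemma za_one[simp]: "zone A i \<in> zcomp A i i" 
proof -
  have "zscale A 1 (zone A i) \<in> zcomp A i i" using za_diag by auto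
  then show ?thesis using vector_space.vector_space_assms(4)[OF za_vs] by simp
qed
lemma za_mul_in: "x \<in> zcomp A j k \<Longrightarrow> y \<in> zcomp A i j \<Longrightarrow> zmul A i j k x y \<in> zcomp A i k"
  using zA by (simp add: zalgebra_def)
lemma za_mul_addL: "x \<in> zcomp A j k \<Longrightarrow> x' \<in> zcomp A j k \<Longrightarrow> y \<in> zcomp A i j \<Longrightarrow>
        zmul A i j k (x + x') y = zmul A i j k x y + zmul A i j k x' y"
  using zA by (simp add: zalgebra_def)
lemma za_mul_addR: "x \<in> zcomp A j k \<Longrightarrow> y \<in> zcomp A i j \<Longrightarrow> y' \<in> zcomp A i j \<Longrightarrow>
        zmul A i j k x (y + y') = zmul A i j k x y + zmul A i j k x y'"
  using zA by (simp add: zalgebra_def)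
lemma za_mul_scaleL: "x \<in> zcomp A j k \<Longrightarrow> y \<in> zcomp A i j \<Longrightarrow>
        zmul A i j k (zscale A c x) y = zscale A c (zmul A i j k x y)"
  using zA by (simp add: zalgebra_def)
lemma za_mul_scaleR: "x \<in> zcomp A j k \<Longrightarrow> y \<in> zcomp A i j \<Longrightarrow>
        zmul A i j k x (zscale A c y) = zscale A c (zmul A i j k x y)"
  using zA by (simp add: zalgebra_def)
lemma za_assoc: "x \<in> zcomp A k l \<Longrightarrow> y \<in> zcomp A j k \<Longrightarrow> z \<in> zcomp A i j \<Longrightarrow>
        zmul A i k l x (zmul A i j k y z) = zmul A i j l (zmul A j k l x y) z"
  using zA by (simp add: zalgebra_def)
lemma za_unitL: "y \<in> zcomp A i j \<Longrightarrow> zmul A i j j (zone A j) y = y"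
  using zA by (simp add: zalgebra_def)
lemma za_unitR: "y \<in> zcomp A i j \<Longrightarrow> zmul A i i j y (zone A i) = y"
  using zA by (simp add: zalgebra_def)
lemma za_mul_0L: "y \<in> zcomp A i j \<Longrightarrow> zmul A i j k 0 y = 0"
  using za_mul_addL[of 0 j k 0 y i] by simp
lemma za_mul_0R: "x \<in> zcomp A j k \<Longrightarrow> zmul A i j k x 0 = 0"
  using za_mul_addR[of x j k 0 i 0] by simp
end

context fixes A :: "('k::field,'v::ab_group_add) zalg" and M :: "('k,'v,'m::ab_group_add) zmod"
  assumes zM: "is_zmod A M"
begin
lemma zm_vs: "vector_space (mscale M)" using zM by (simp add: is_zmod_def)
lemma zm_mod: "module (mscale M)" using zm_vs by (simp add: module_iff_vector_space)
lemma zm_sub: "module.subspace (mscale M) (mcomp M i)" using zM by (simp add: is_zmod_def)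
lemma zm_0[simp]: "0 \<in> mcomp M i" using module.subspace_0[OF zm_mod zm_sub] .
lemma zm_add: "x \<in> mcomp M i \<Longrightarrow> y \<in> mcomp M i \<Longrightarrow> x + y \<in> mcomp M i"
  using module.subspace_add[OF zm_mod zm_sub] .
lemma zm_scale: "x \<in> mcomp M i \<Longrightarrow> mscale M c x \<in> mcomp M i"
  using module.subspace_scale[OF zm_mod zm_sub] .
lemma zm_sum: "(\<And>x. x \<in> S \<Longrightarrow> g x \<in> mcomp M i) \<Longrightarrow> sum g S \<in> mcomp M i"
  using module.subspace_sum[OF zm_mod zm_sub] .
lemma zm_act_in: "m \<in> mcomp M j \<Longrightarrow> a \<in> zcomp A i j \<Longrightarrow> mact M i j m a \<in> mcomp M i"
  using zM by (simp add: is_zmod_def)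
lemma zm_addL: "m \<in> mcomp M j \<Longrightarrow> m' \<in> mcomp M j \<Longrightarrow> a \<in> zcomp A i j \<Longrightarrow>
        mact M i j (m + m') a = mact M i j m a + mact M i j m' a"
  using zM by (simp add: is_zmod_def)
lemma zm_addR: "m \<in> mcomp M j \<Longrightarrow> a \<in> zcomp A i j \<Longrightarrow> a' \<in> zcomp A i j \<Longrightarrow>
        mact M i j m (a + a') = mact M i j m a + mact M i j m a'"
  using zM by (simp add: is_zmod_def)
lemma zm_scaleL: "m \<in> mcomp M j \<Longrightarrow> a \<in> zcomp A i j \<Longrightarrow>
        mact M i j (mscale M c m) a = mscale M c (mact M i j m a)"
  using zM by (simp add: is_zmod_def)
lemma zm_scaleR: "m \<in> mcomp M j \<Longrightarrow> a \<in> zcomp A i j \<Longrightarrow>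
        mact M i j m (zscale A c a) = mscale M c (mact M i j m a)"
  using zM by (simp add: is_zmod_def)
lemma zm_assoc: "m \<in> mcomp M k \<Longrightarrow> y \<in> zcomp A j k \<Longrightarrow> x \<in> zcomp A i j \<Longrightarrow>
        mact M i j (mact M j k m y) x = mact M i k m (zmul A i j k y x)"
  using zM by (simp add: is_zmod_def)
lemma zm_unit: "m \<in> mcomp M j \<Longrightarrow> mact M j j m (zone A j) = m"
  using zM by (simp add: is_zmod_def)
lemma zm_sumL: "finite S \<Longrightarrow> (\<And>x. x \<in> S \<Longrightarrow> g x \<in> mcomp M j) \<Longrightarrow> a \<in> zcomp A i j \<Longrightarrow>
   mact M i j (sum g S) a = (\<Sum>x\<in>S. mact M i j (g x) a)"
proof (induction S rule: finite_induct)
  case empty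
  then show ?case using zm_addL[of 0 j 0 a i] by simp
next
  case (insert x F)
  then show ?case by (simp add: zm_addL zm_sum)
qed
lemma zm_scale_sum: "mscale M c (sum g S) = (\<Sum>x\<in>S. mscale M c (g x))"
  using module.scale_sum_right[OF zm_mod] .
end

context fixes A :: "('k::field,'v::ab_group_add) zalg" and M :: "('k,'v,'m::ab_group_add) zmod"
   and N :: "('k,'v,'n::ab_group_add) zmod" and h
  assumes zM: "is_zmod A M" and zh: "zmod_hom A M N h"
begin
lemma zh_in: "m \<in> mcomp M i \<Longrightarrow> h i m \<in> mcomp N i" using zh by (simp add: zmod_hom_def)
lemma zh_add: "m \<in> mcomp M i \<Longrightarrow> m' \<in> mcomp M i \<Longrightarrow> h i (m + m') = h i m + h i m'"
  using zh by (simp add: zmod_hom_def)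
lemma zh_scale: "m \<in> mcomp M i \<Longrightarrow> h i (mscale M c m) = mscale N c (h i m)"
  using zh by (simp add: zmod_hom_def)
lemma zh_act: "m \<in> mcomp M j \<Longrightarrow> a \<in> zcomp A i j \<Longrightarrow> h i (mact M i j m a) = mact N i j (h j m) a"
  using zh by (simp add: zmod_hom_def)
lemma zh_0: "h i 0 = 0" using zh_add[of 0 i 0] zm_0[OF zM] by simp
lemma zh_sum: "finite S \<Longrightarrow> (\<And>x. x \<in> S \<Longrightarrow> g x \<in> mcomp M i) \<Longrightarrow> h i (sum g S) = (\<Sum>x\<in>S. h i (g x))"
proof (induction S rule: finite_induct)
  case empty
  then show ?case by (simp add: zh_0)
next
  case (insert x F)
  then show ?case by (simp add: zh_add zm_sum[OF zM])
qed
end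


lemma zpsum_simps[simp]:
  "mscale (zpsum A js) = (\<lambda>c v t. zscale A c (v t))"
  "mcomp (zpsum A js) i = {v. (\<forall>t < length js. v t \<in> zcomp A i (js ! t)) \<and> (\<forall>t \<ge> length js. v t = 0)}"
  "mact (zpsum A js) = (\<lambda>i l v a t. if t < length js then zmul A i l (js ! t) (v t) a else 0)"
  by (simp_all add: zpsum_def)
lemma zproj_simps[simp]:
  "mscale (zproj A j) = zscale A" "mcomp (zproj A j) i = zcomp A i j"
  "mact (zproj A j) = (\<lambda>i l m a. zmul A i l j m a)"
  by (simp_all add: zproj_def)
lemma zsimple_simps[simp]:
  "mscale (zsimple A j) = zscale A" "mcomp (zsimple A j) i = (if i = j then zcomp A j j else {0})"
  "mact (zsimple A j) = (\<lambda>i l m a. if i = j \<and> l = j then zmul A j j j m a else 0)"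
  by (simp_all add: zsimple_def)
lemma zrestrict_simps[simp]:
  "mscale (zrestrict f M) = mscale M" "mcomp (zrestrict f M) = mcomp M"
  "mact (zrestrict f M) = (\<lambda>i l m a. mact M i l m (f i l a))"
  by (simp_all add: zrestrict_def)
lemma zker_simps[simp]:
  "mscale (zker M h) = mscale M" "mcomp (zker M h) i = {m \<in> mcomp M i. h i m = 0}"
  "mact (zker M h) = mact M"
  by (simp_all add: zker_def)

lemma zpsum_is_zmod:
  fixes A :: "('k::field,'v::ab_group_add) zalg"
  assumes zA: "zalgebra A"
  shows "is_zmod A (zpsum A js)"
proof -
  note vs = vector_space.vector_space_assms[OF za_vs[OF zA]]
  have v: "vector_space (\<lambda>c (v::nat\<Rightarrow>'v) t. zscale A c (v t))"
    unfolding vector_space_def by (simp add: vs fun_eq_iff)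
  then have m: "module (\<lambda>c (v::nat\<Rightarrow>'v) t. zscale A c (v t))" by (simp add: module_iff_vector_space)
  have "module.subspace (mscale (zpsum A js)) (mcomp (zpsum A js) i)" for i
    by (rule module.subspaceI) (auto simp: m zpsum_def za_add[OF zA] za_scale[OF zA] za_0[OF zA] module.scale_zero_right[OF za_mod[OF zA]])
  with v
  show ?thesis
    unfolding is_zmod_def
    by (auto simp: zpsum_def fun_eq_iff zA za_mul_in za_mul_addL za_mul_addR za_mul_scaleL
        za_mul_scaleR za_assoc za_unitR module.scale_zero_right[OF za_mod[OF zA]])
qed

lemma zker_is_zmod:
  assumes zA: "zalgebra A" and zM: "is_zmod A M" and vN: "vector_space (mscale N)"
    and h: "zmod_hom A M N h" and N0: "\<And>i j a. a \<in> zcomp A i j \<Longrightarrow> mact N i j 0 a = 0"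
  shows "is_zmod A (zker M h)"
proof -
  have "module.subspace (mscale M) {m \<in> mcomp M i. h i m = 0}" for i
    apply (rule module.subspaceI[OF zm_mod[OF zM]])
    using zm_0[OF zM] zh_add[OF zM h] zh_scale[OF zM h] zh_0[OF zM h] zm_add[OF zM] zm_scale[OF zM]
      vector_space.scale_eq_0_iff[OF vN]
    by auto
  then show ?thesis
    using zM unfolding is_zmod_def zker_def
    by (auto simp: zh_act[OF zM h] N0)
qed

lemma zrestrict_zker: "zrestrict f (zker M h) = zker (zrestrict f M) h"
  by (simp add: zrestrict_def zker_def)

lemma zalg_hom_in: "zalg_hom A B f \<Longrightarrow> x \<in> zcomp A i j \<Longrightarrow> f i j x \<in> zcomp B i j"
  by (simp add: zalg_hom_def)

lemma zrestrict_hom: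
  assumes f: "zalg_hom A B f" and h: "zmod_hom B M N h"
  shows "zmod_hom A (zrestrict f M) (zrestrict f N) h"
  using h zalg_hom_in[OF f] unfolding zmod_hom_def zrestrict_def by auto

lemma zmod_hom_comp:
  assumes "zmod_hom A M N h" "zmod_hom A N P g"
  shows "zmod_hom A M P (\<lambda>i m. g i (h i m))"
  using assms unfolding zmod_hom_def by auto


lemma fin_gen_ker:
  assumes zA: "zalgebra A" and fg: "fin_gen A M" and psi: "zmod_hom A M N \<psi>"
    and coh: "\<forall>js h. zmod_hom A (zpsum A js) N h \<longrightarrow> fin_gen A (zker (zpsum A js) h)"
  shows "fin_gen A (zker M \<psi>)"
proof -
  obtain js \<pi> where pi: "zmod_hom A (zpsum A js) M \<pi>"
    and ps: "\<forall>i. \<pi> i ` mcomp (zpsum A js) i = mcomp M i"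
    using fg unfolding fin_gen_def by blast
  have "zmod_hom A (zpsum A js) N (\<lambda>i m. \<psi> i (\<pi> i m))" by (rule zmod_hom_comp[OF pi psi])
  then obtain js' g where g: "zmod_hom A (zpsum A js') (zker (zpsum A js) (\<lambda>i m. \<psi> i (\<pi> i m))) g"
    and gs: "\<forall>i. g i ` mcomp (zpsum A js') i = mcomp (zker (zpsum A js) (\<lambda>i m. \<psi> i (\<pi> i m))) i"
    using coh unfolding fin_gen_def by blast
  have hom: "zmod_hom A (zpsum A js') (zker M \<psi>) (\<lambda>i q. \<pi> i (g i q))"
    using g pi unfolding zmod_hom_def by (auto simp del: zpsum_simps)
  have "(\<lambda>q. \<pi> i (g i q)) ` mcomp (zpsum A js') i = mcomp (zker M \<psi>) i" for i
  proof
    show "(\<lambda>q. \<pi> i (g i q)) ` mcomp (zpsum A js') i \<subseteq> mcomp (zker M \<psi>) i"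
      using hom unfolding zmod_hom_def by blast
    show "mcomp (zker M \<psi>) i \<subseteq> (\<lambda>q. \<pi> i (g i q)) ` mcomp (zpsum A js') i"
    proof
      fix m assume m: "m \<in> mcomp (zker M \<psi>) i"
      have "m \<in> \<pi> i ` mcomp (zpsum A js) i" using m ps by (simp del: zpsum_simps)
      then obtain p where p: "p \<in> mcomp (zpsum A js) i" "\<pi> i p = m" by blast
      then have "p \<in> mcomp (zker (zpsum A js) (\<lambda>i m. \<psi> i (\<pi> i m))) i" using m
        by (simp del: zpsum_simps)
      then have "p \<in> g i ` mcomp (zpsum A js') i" using gs by metis
      then obtain q where "q \<in> mcomp (zpsum A js') i" "g i q = p" by blast
      then show "m \<in> (\<lambda>q. \<pi> i (g i q)) ` mcomp (zpsum A js') i" using p by blast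
    qed
  qed
  then show ?thesis using hom unfolding fin_gen_def by blast
qed


lemma fg_sum:
  fixes A :: "('k::field,'v::ab_group_add) zalg" and B :: "('k,'w::ab_group_add) zalg"
  assumes zA: "zalgebra A" and zB: "zalgebra B" and f: "zalg_hom A B f"
    and fg: "\<forall>j. fin_gen A (zrestrict f (zproj B j))"
  shows "fin_gen A (zrestrict f (zpsum B js))"
proof (induction js)
  case Nil
  have "zmod_hom A (zpsum A []) (zrestrict f (zpsum B [])) (\<lambda>i v (t::nat). 0::'w)"
    by (auto simp: zmod_hom_def fun_eq_iff module.scale_zero_right[OF za_mod[OF zB]])
  moreover have "(\<lambda>v (t::nat). 0::'w) ` mcomp (zpsum A []) i = mcomp (zrestrict f (zpsum B [])) i" for i
  proof -
    have "(\<lambda>t. 0::'v) \<in> mcomp (zpsum A []) i" by simp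
    then show ?thesis by (auto simp: fun_eq_iff)
  qed
  ultimately show ?case unfolding fin_gen_def by blast
next
  case (Cons j js)
  obtain l1 h1 where h1: "zmod_hom A (zpsum A l1) (zrestrict f (zproj B j)) h1"
    and s1: "\<forall>i. h1 i ` mcomp (zpsum A l1) i = mcomp (zrestrict f (zproj B j)) i"
    using fg unfolding fin_gen_def by blast
  obtain l2 h2 where h2: "zmod_hom A (zpsum A l2) (zrestrict f (zpsum B js)) h2"
    and s2: "\<forall>i. h2 i ` mcomp (zpsum A l2) i = mcomp (zrestrict f (zpsum B js)) i"
    using Cons.IH unfolding fin_gen_def by blast
  note P1 = zpsum_is_zmod[OF zA, of l1] and P2 = zpsum_is_zmod[OF zA, of l2]
  note sc0 = module.scale_zero_right[OF za_mod[OF zA]]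
  define n1 where "n1 = length l1"
  define R where "R = (\<lambda>(v::nat\<Rightarrow>'v) s. if s < n1 then v s else 0)"
  define S where "S = (\<lambda>(v::nat\<Rightarrow>'v) s. v (s + n1))"
  define H where "H = (\<lambda>i v t. if t = 0 then h1 i (R v) else h2 i (S v) (t - 1))"
  have R_in: "R v \<in> mcomp (zpsum A l1) i" if "v \<in> mcomp (zpsum A (l1@l2)) i" for v i
    using that by (auto simp: R_def n1_def nth_append) (metis trans_less_add1)
  have S_in: "S v \<in> mcomp (zpsum A l2) i" if "v \<in> mcomp (zpsum A (l1@l2)) i" for v i
    using that unfolding S_def n1_def
    apply (auto simp: nth_append)
    subgoal for t by (erule allE[of _ "t + length l1"]) simp
    done
  have R_add: "R (v + v') = R v + R v'" for v v' by (simp add: R_def fun_eq_iff)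
  have S_add: "S (v + v') = S v + S v'" for v v' by (simp add: S_def fun_eq_iff)
  have R_scale: "R (mscale (zpsum A (l1@l2)) c v) = mscale (zpsum A l1) c (R v)" for c v
    by (simp add: R_def fun_eq_iff sc0)
  have S_scale: "S (mscale (zpsum A (l1@l2)) c v) = mscale (zpsum A l2) c (S v)" for c v
    by (simp add: S_def fun_eq_iff)
  have R_act: "R (mact (zpsum A (l1@l2)) i l v a) = mact (zpsum A l1) i l (R v) a" for i l v a
    by (simp add: R_def fun_eq_iff n1_def nth_append)
  have S_act: "S (mact (zpsum A (l1@l2)) i l v a) = mact (zpsum A l2) i l (S v) a" for i l v a
    by (simp add: S_def fun_eq_iff n1_def nth_append)
  have H_in: "H i v \<in> mcomp (zrestrict f (zpsum B (j#js))) i"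
    if v: "v \<in> mcomp (zpsum A (l1@l2)) i" for v i
  proof -
    have a: "h1 i (R v) \<in> zcomp B i j" using zh_in[OF P1 h1 R_in[OF v]] by simp
    have b: "h2 i (S v) \<in> mcomp (zpsum B js) i" using zh_in[OF P2 h2 S_in[OF v]] by simp
    show ?thesis using a b by (auto simp: H_def nth_Cons')
  qed
  have hom: "zmod_hom A (zpsum A (l1@l2)) (zrestrict f (zpsum B (j#js))) H"
    unfolding zmod_hom_def
  proof (intro conjI allI impI)
    fix i m assume "m \<in> mcomp (zpsum A (l1@l2)) i"
    then show "H i m \<in> mcomp (zrestrict f (zpsum B (j#js))) i" by (rule H_in)
  next
    fix i m m' assume m: "m \<in> mcomp (zpsum A (l1@l2)) i" and m': "m' \<in> mcomp (zpsum A (l1@l2)) i"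
    show "H i (m + m') = H i m + H i m'"
      by (simp add: H_def fun_eq_iff R_add S_add zh_add[OF P1 h1 R_in[OF m] R_in[OF m']]
          zh_add[OF P2 h2 S_in[OF m] S_in[OF m']])
  next
    fix i c m assume m: "m \<in> mcomp (zpsum A (l1@l2)) i"
    have e1: "h1 i (R (mscale (zpsum A (l1@l2)) c m)) = zscale B c (h1 i (R m))"
      using zh_scale[OF P1 h1 R_in[OF m], of c] by (simp only: R_scale) simp
    have e2: "h2 i (S (mscale (zpsum A (l1@l2)) c m)) = (\<lambda>t. zscale B c (h2 i (S m) t))"
      using zh_scale[OF P2 h2 S_in[OF m], of c] by (simp only: S_scale) simp
    show "H i (mscale (zpsum A (l1 @ l2)) c m) = mscale (zrestrict f (zpsum B (j # js))) c (H i m)"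
      using e1 e2 by (simp add: H_def fun_eq_iff)
  next
    fix i l m a assume m: "m \<in> mcomp (zpsum A (l1@l2)) l" and a: "a \<in> zcomp A i l"
    have e1: "h1 i (R (mact (zpsum A (l1@l2)) i l m a)) = zmul B i l j (h1 l (R m)) (f i l a)"
      using zh_act[OF P1 h1 R_in[OF m] a] by (simp only: R_act) simp
    have e2: "h2 i (S (mact (zpsum A (l1@l2)) i l m a)) =
       (\<lambda>t. if t < length js then zmul B i l (js ! t) (h2 l (S m) t) (f i l a) else 0)"
      using zh_act[OF P2 h2 S_in[OF m] a] by (simp only: S_act) simp
    show "H i (mact (zpsum A (l1 @ l2)) i l m a) = mact (zrestrict f (zpsum B (j # js))) i l (H l m) a"
      using e1 e2 by (auto simp: H_def fun_eq_iff nth_Cons')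
  qed
  have "H i ` mcomp (zpsum A (l1@l2)) i = mcomp (zrestrict f (zpsum B (j#js))) i" for i
  proof
    show "H i ` mcomp (zpsum A (l1 @ l2)) i \<subseteq> mcomp (zrestrict f (zpsum B (j # js))) i"
      using H_in by blast
    show "mcomp (zrestrict f (zpsum B (j # js))) i \<subseteq> H i ` mcomp (zpsum A (l1 @ l2)) i"
    proof
      fix w assume w: "w \<in> mcomp (zrestrict f (zpsum B (j # js))) i"
      have "w 0 \<in> mcomp (zrestrict f (zproj B j)) i" using w
        apply simp apply (elim conjE) apply (drule spec[of _ 0]) by simp
      then have "w 0 \<in> h1 i ` mcomp (zpsum A l1) i" by (simp only: s1)
      then obtain v1 where v1: "v1 \<in> mcomp (zpsum A l1) i" "h1 i v1 = w 0" by (metis imageE)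
      have wl: "\<forall>t<Suc (length js). w t \<in> zcomp B i ((j # js) ! t)" "\<forall>t\<ge>Suc (length js). w t = 0"
        using w by simp_all
      have "w (Suc t) \<in> zcomp B i (js ! t)" if "t < length js" for t
        using wl(1)[rule_format, of "Suc t"] that by simp
      moreover have "w (Suc t) = 0" if "t \<ge> length js" for t
        using wl(2)[rule_format, of "Suc t"] that by simp
      ultimately have "(\<lambda>t. w (Suc t)) \<in> mcomp (zrestrict f (zpsum B js)) i" by simp
      then have "(\<lambda>t. w (Suc t)) \<in> h2 i ` mcomp (zpsum A l2) i" by (simp only: s2)
      then obtain v2 where v2: "v2 \<in> mcomp (zpsum A l2) i" "h2 i v2 = (\<lambda>t. w (Suc t))" by (metis imageE)
      define v where "v = (\<lambda>s. if s < n1 then v1 s else v2 (s - n1))"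
      have vin: "v \<in> mcomp (zpsum A (l1@l2)) i"
      proof -
        have "v t \<in> zcomp A i ((l1@l2) ! t)" if "t < length (l1@l2)" for t
        proof (cases "t < n1")
          case True then show ?thesis using v1(1) by (simp add: v_def n1_def nth_append)
        next
          case False then show ?thesis using v2(1) that by (simp add: v_def n1_def nth_append)
        qed
        moreover have "v t = 0" if "t \<ge> length (l1@l2)" for t
          using v2(1) that by (simp add: v_def n1_def)
        ultimately show ?thesis by simp
      qed
      have Rv: "R v = v1"
      proof
        fix s show "R v s = v1 s" using v1(1) by (simp add: R_def v_def n1_def)
      qed
      have Sv: "S v = v2" by (simp add: S_def v_def fun_eq_iff)
      have "H i v = w"
      proof
        fix t show "H i v t = w t"
        proof (cases t)
          case 0 then show ?thesis using v1(2) Rv by (simp add: H_def)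
        next
          case (Suc t') then show ?thesis using v2(2) Sv by (simp add: H_def)
        qed
      qed
      then show "w \<in> H i ` mcomp (zpsum A (l1 @ l2)) i" using vin by blast
    qed
  qed
  then show ?case using hom unfolding fin_gen_def by blast
qed


lemma sum_fun_app: "(\<Sum>t\<in>S. F t) (x::'a) = (\<Sum>t\<in>S. F t x)"
  by (induction S rule: infinite_finite_induct) auto

lemma zalg_hom_add: "zalg_hom A B f \<Longrightarrow> x \<in> zcomp A i j \<Longrightarrow> y \<in> zcomp A i j \<Longrightarrow> f i j (x + y) = f i j x + f i j y"
  by (simp add: zalg_hom_def)

lemma fg_lift:
  fixes A :: "('k::field,'v::ab_group_add) zalg" and B :: "('k,'w::ab_group_add) zalg"
    and K :: "('k,'w,'m::ab_group_add) zmod"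
  assumes zA: "zalgebra A" and zB: "zalgebra B" and f: "zalg_hom A B f"
    and zK: "is_zmod B K" and fg: "fin_gen A (zrestrict f K)"
  shows "fin_gen B K"
proof -
  obtain js h where h: "zmod_hom A (zpsum A js) (zrestrict f K) h"
    and hs: "\<forall>i. h i ` mcomp (zpsum A js) i = mcomp (zrestrict f K) i"
    using fg unfolding fin_gen_def by blast
  note P = zpsum_is_zmod[OF zA, of js]
  define n where "n = length js"
  define e where "e t = (\<lambda>s. if s = t then zone A (js!t) else 0)" for t :: nat
  have e_in: "e t \<in> mcomp (zpsum A js) (js!t)" if "t < n" for t
    using that za_one[OF zA] za_0[OF zA] by (auto simp: e_def n_def)
  define g where "g t = h (js!t) (e t)" for t
  have g_in: "g t \<in> mcomp K (js!t)" if "t < n" for t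
    using zh_in[OF P h e_in[OF that]] by (simp add: g_def)
  define H where "H i w = (\<Sum>t<n. mact K i (js!t) (g t) (w t))" for i w
  have H_in: "H i w \<in> mcomp K i" if w: "w \<in> mcomp (zpsum B js) i" for i w
    unfolding H_def
    by (rule zm_sum[OF zK]) (use w g_in zm_act_in[OF zK] in \<open>auto simp: n_def\<close>)
  have hom: "zmod_hom B (zpsum B js) K H"
    unfolding zmod_hom_def
  proof (intro conjI allI impI)
    fix i w assume "w \<in> mcomp (zpsum B js) i" then show "H i w \<in> mcomp K i" by (rule H_in)
  next
    fix i w w' assume w: "w \<in> mcomp (zpsum B js) i" and w': "w' \<in> mcomp (zpsum B js) i"
    have "H i (w + w') = (\<Sum>t<n. mact K i (js!t) (g t) (w t) + mact K i (js!t) (g t) (w' t))"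
      unfolding H_def
      by (rule sum.cong) (use w w' g_in in \<open>auto simp: zm_addR[OF zK] n_def\<close>)
    then show "H i (w + w') = H i w + H i w'" by (simp add: H_def sum.distrib)
  next
    fix i c w assume w: "w \<in> mcomp (zpsum B js) i"
    have "H i (mscale (zpsum B js) c w) = (\<Sum>t<n. mscale K c (mact K i (js!t) (g t) (w t)))"
      unfolding H_def
      by (rule sum.cong) (use w g_in in \<open>auto simp: zm_scaleR[OF zK] n_def\<close>)
    then show "H i (mscale (zpsum B js) c w) = mscale K c (H i w)"
      by (simp add: H_def zm_scale_sum[OF zK])
  next
    fix i l w a assume w: "w \<in> mcomp (zpsum B js) l" and a: "a \<in> zcomp B i l"
    have "H i (mact (zpsum B js) i l w a) = (\<Sum>t<n. mact K i l (mact K l (js!t) (g t) (w t)) a)"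
      unfolding H_def
      by (rule sum.cong) (use w g_in a in \<open>auto simp: zm_assoc[OF zK] n_def\<close>)
    also have "\<dots> = mact K i l (H l w) a"
      unfolding H_def
      by (rule zm_sumL[OF zK, symmetric]) (use w g_in a zm_act_in[OF zK] in \<open>auto simp: n_def\<close>)
    finally show "H i (mact (zpsum B js) i l w a) = mact K i l (H l w) a" .
  qed
  have "H i ` mcomp (zpsum B js) i = mcomp K i" for i
  proof
    show "H i ` mcomp (zpsum B js) i \<subseteq> mcomp K i" using H_in by blast
    show "mcomp K i \<subseteq> H i ` mcomp (zpsum B js) i"
    proof
      fix m assume m: "m \<in> mcomp K i"
      then have "m \<in> h i ` mcomp (zpsum A js) i" using hs by simp
      then obtain v where v: "v \<in> mcomp (zpsum A js) i" "h i v = m" by (metis imageE)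
      define F where "F t = mact (zpsum A js) i (js!t) (e t) (v t)" for t
      have F_in: "F t \<in> mcomp (zpsum A js) i" if "t < n" for t
        unfolding F_def using zm_act_in[OF P e_in[OF that]] v(1) that n_def by simp
      have vsum: "v = (\<Sum>t<n. F t)"
      proof
        fix s
        have "(\<Sum>t<n. F t) s = (\<Sum>t<n. F t s)" by (rule sum_fun_app)
        also have "\<dots> = (\<Sum>t<n. if t = s then v s else 0)"
        proof (rule sum.cong)
          fix t assume t: "t \<in> {..<n}"
          have vt: "v t \<in> zcomp A i (js!t)" using v(1) t by (simp add: n_def)
          show "F t s = (if t = s then v s else 0)"
          proof (cases "t = s")
            case True then show ?thesis using t vt za_unitL[OF zA vt] by (simp add: F_def e_def n_def)
          next
            case False then show ?thesis using t vt za_mul_0L[OF zA vt] by (simp add: F_def e_def n_def)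
          qed
        qed simp
        also have "\<dots> = v s" using v(1) by (simp add: n_def)
        finally show "v s = (\<Sum>t<n. F t) s" by simp
      qed
      define w where "w t = (if t < n then f i (js!t) (v t) else 0)" for t
      have w_in: "w \<in> mcomp (zpsum B js) i"
        using v(1) zalg_hom_in[OF f] by (auto simp: w_def n_def)
      have "m = h i (\<Sum>t<n. F t)" using v(2) vsum by simp
      also have "\<dots> = (\<Sum>t<n. h i (F t))" by (rule zh_sum[OF P h]) (use F_in in auto)
      also have "\<dots> = H i w"
        unfolding H_def
      proof (rule sum.cong)
        fix t assume t: "t \<in> {..<n}"
        have vt: "v t \<in> zcomp A i (js!t)" using v(1) t by (simp add: n_def)
        show "h i (F t) = mact K i (js ! t) (g t) (w t)"
          unfolding F_def using zh_act[OF P h e_in vt] t by (simp add: g_def w_def)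
      qed simp
      finally show "m \<in> H i ` mcomp (zpsum B js) i" using w_in by blast
    qed
  qed
  then show ?thesis using hom unfolding fin_gen_def by blast
qed


lemma zproj_is_zmod:
  assumes zA: "zalgebra A" shows "is_zmod A (zproj A j)"
  unfolding is_zmod_def
  using za_vs[OF zA] za_sub[OF zA]
  by (auto simp: za_mul_in[OF zA] za_mul_addL[OF zA] za_mul_addR[OF zA] za_mul_scaleL[OF zA]
      za_mul_scaleR[OF zA] za_assoc[OF zA] za_unitL[OF zA] za_unitR[OF zA])

lemma za_mul_offdiag:
  assumes zA: "zalgebra A" and l: "l \<noteq> j" and x: "x \<in> zcomp A l j" and a: "a \<in> zcomp A j l"
  shows "zmul A j l j x a = 0"
proof (cases "j < l")
  case True
  then have "x = 0" using x za_below[OF zA] by auto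
  then show ?thesis using za_mul_0L[OF zA a] by simp
next
  case False
  then have "l < j" using l by simp
  then have "a = 0" using a za_below[OF zA] by auto
  then show ?thesis using za_mul_0R[OF zA x] by simp
qed

lemma fg_simple:
  fixes B :: "('k::field,'w::ab_group_add) zalg"
  assumes zB: "zalgebra B" shows "fin_gen B (zsimple B j)"
proof -
  define h where "h i v = (if i = j then v (0::nat) else 0)" for i and v :: "nat \<Rightarrow> 'w"
  have hom: "zmod_hom B (zpsum B [j]) (zsimple B j) h"
    unfolding zmod_hom_def
  proof (intro conjI allI impI)
    fix i m assume "m \<in> mcomp (zpsum B [j]) i"
    then show "h i m \<in> mcomp (zsimple B j) i" by (auto simp: h_def)
  next
    fix i m m' show "h i (m + m') = h i m + h i m'" by (simp add: h_def)
  next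
    fix i c m show "h i (mscale (zpsum B [j]) c m) = mscale (zsimple B j) c (h i m)"
      by (simp add: h_def module.scale_zero_right[OF za_mod[OF zB]])
  next
    fix i l m a assume m: "m \<in> mcomp (zpsum B [j]) l" and a: "a \<in> zcomp B i l"
    have m0: "m 0 \<in> zcomp B l j" using m by simp
    show "h i (mact (zpsum B [j]) i l m a) = mact (zsimple B j) i l (h l m) a"
      using za_mul_offdiag[OF zB _ m0] a by (auto simp: h_def)
  qed
  have "h i ` mcomp (zpsum B [j]) i = mcomp (zsimple B j) i" for i
  proof
    show "h i ` mcomp (zpsum B [j]) i \<subseteq> mcomp (zsimple B j) i"
      using hom unfolding zmod_hom_def by blast
    show "mcomp (zsimple B j) i \<subseteq> h i ` mcomp (zpsum B [j]) i"
    proof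
      fix m assume m: "m \<in> mcomp (zsimple B j) i"
      define v where "v t = (if t = 0 then m else 0)" for t :: nat
      have "v \<in> mcomp (zpsum B [j]) i" using m za_0[OF zB] by (auto simp: v_def split: if_splits)
      moreover have "h i v = m" using m by (auto simp: h_def v_def split: if_splits)
      ultimately show "m \<in> h i ` mcomp (zpsum B [j]) i" by blast
    qed
  qed
  then show ?thesis using hom unfolding fin_gen_def by blast
qed

lemma simple_ker:
  fixes A :: "('k::field,'v::ab_group_add) zalg" and B :: "('k,'w::ab_group_add) zalg"
  assumes zA: "zalgebra A" and zB: "zalgebra B" and f: "zalg_hom A B f"
    and coh: "coherent_mod A (zsimple A j)"
    and h: "zmod_hom A (zpsum A js) (zrestrict f (zsimple B j)) h"
  shows "fin_gen A (zker (zpsum A js) h)"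
proof -
  have fsc: "f i j (zscale A c x) = zscale B c (f i j x)" if "x \<in> zcomp A i j" for i j c x
    using f that by (simp add: zalg_hom_def)
  have fone: "f i i (zone A i) = zone B i" for i using f by (simp add: zalg_hom_def)
  have fmul: "f i k (zmul A i j k x y) = zmul B i j k (f j k x) (f i j y)"
    if "x \<in> zcomp A j k" "y \<in> zcomp A i j" for i j k x y
    using f that by (simp add: zalg_hom_def)
  have fsurj: "\<exists>x. x \<in> zcomp A j j \<and> f j j x = y" if yB: "y \<in> zcomp B j j" for y
  proof -
    obtain c where "y = zscale B c (zone B j)" using yB by (auto simp: za_diag[OF zB])
    moreover have "zscale A c (zone A j) \<in> zcomp A j j" by (auto simp: za_diag[OF zA])
    ultimately show ?thesis using fsc[of "zone A j" j j c] fone za_one[OF zA] by metis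
  qed
  have finj: "x = x'" if xx: "x \<in> zcomp A j j" "x' \<in> zcomp A j j" "f j j x = f j j x'" for x x'
  proof -
    obtain c where c: "x = zscale A c (zone A j)" using xx(1) by (auto simp: za_diag[OF zA])
    obtain c' where c': "x' = zscale A c' (zone A j)" using xx(2) by (auto simp: za_diag[OF zA])
    have "zscale B c (zone B j) = zscale B c' (zone B j)"
      using xx(3) c c' fsc[OF za_one[OF zA]] fone by metis
    then have "c = c'" using vector_space.scale_cancel_right[OF za_vs[OF zB]] za_one_ne[OF zB] by blast
    then show ?thesis using c c' by simp
  qed
  have f0: "f j j 0 = 0" using zalg_hom_add[OF f za_0[OF zA] za_0[OF zA], of j j] by simp
  define G where "G i y = (if i = j then (SOME x. x \<in> zcomp A j j \<and> f j j x = y) else 0)" for i y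
  have G_spec: "G j y \<in> zcomp A j j \<and> f j j (G j y) = y" if "y \<in> zcomp B j j" for y
    unfolding G_def using someI_ex[OF fsurj[OF that]] by simp
  have G0: "G i 0 = 0" for i
    using G_spec[OF za_0[OF zB]] finj[of "G j 0" 0] f0 za_0[OF zA] by (auto simp: G_def)
  have Gker: "G i y = 0 \<longleftrightarrow> y = 0" if "y \<in> mcomp (zsimple B j) i" for i y
  proof (cases "i = j")
    case True
    then show ?thesis using that G_spec[of y] G0 f0 by auto
  next
    case False then show ?thesis using that by (simp add: G_def)
  qed
  have Ghom: "zmod_hom A (zrestrict f (zsimple B j)) (zsimple A j) G"
    unfolding zmod_hom_def
  proof (intro conjI allI impI)
    fix i m assume "m \<in> mcomp (zrestrict f (zsimple B j)) i"
    then show "G i m \<in> mcomp (zsimple A j) i" using G_spec by (auto simp: G_def)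
  next
    fix i m m' assume m: "m \<in> mcomp (zrestrict f (zsimple B j)) i"
      and m': "m' \<in> mcomp (zrestrict f (zsimple B j)) i"
    show "G i (m + m') = G i m + G i m'"
    proof (cases "i = j")
      case True
      then have y: "m \<in> zcomp B j j" "m' \<in> zcomp B j j" using m m' by auto
      have "G j (m + m') = G j m + G j m'"
        apply (rule finj)
        using G_spec[OF za_add[OF zB y]] G_spec[OF y(1)] G_spec[OF y(2)] za_add[OF zA]
          zalg_hom_add[OF f] by auto
      then show ?thesis using True by simp
    next
      case False then show ?thesis by (simp add: G_def)
    qed
  next
    fix i c m assume m: "m \<in> mcomp (zrestrict f (zsimple B j)) i"
    show "G i (mscale (zrestrict f (zsimple B j)) c m) = mscale (zsimple A j) c (G i m)"
    proof (cases "i = j")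
      case True
      then have y: "m \<in> zcomp B j j" using m by auto
      have "G j (zscale B c m) = zscale A c (G j m)"
        apply (rule finj)
        using G_spec[OF za_scale[OF zB y]] G_spec[OF y] za_scale[OF zA] fsc by auto
      then show ?thesis using True by simp
    next
      case False then show ?thesis by (simp add: G_def module.scale_zero_right[OF za_mod[OF zA]])
    qed
  next
    fix i l m a assume m: "m \<in> mcomp (zrestrict f (zsimple B j)) l" and a: "a \<in> zcomp A i l"
    show "G i (mact (zrestrict f (zsimple B j)) i l m a) = mact (zsimple A j) i l (G l m) a"
    proof (cases "i = j \<and> l = j")
      case True
      then have y: "m \<in> zcomp B j j" and a': "a \<in> zcomp A j j" using m a by auto
      have fa: "f j j a \<in> zcomp B j j" using zalg_hom_in[OF f a'] .
      have "G j (zmul B j j j m (f j j a)) = zmul A j j j (G j m) a"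
        apply (rule finj)
        using G_spec[OF za_mul_in[OF zB y fa]] G_spec[OF y] za_mul_in[OF zA _ a'] fmul[OF _ a'] by auto
      then show ?thesis using True by simp
    next
      case False
      then have "mact (zrestrict f (zsimple B j)) i l m a = 0" by auto
      moreover have "mact (zsimple A j) i l (G l m) a = 0" using False by auto
      ultimately show ?thesis using G0 by simp
    qed
  qed
  have "zmod_hom A (zpsum A js) (zsimple A j) (\<lambda>i m. G i (h i m))"
    by (rule zmod_hom_comp[OF h Ghom])
  then have fgk: "fin_gen A (zker (zpsum A js) (\<lambda>i m. G i (h i m)))"
    using coh unfolding coherent_mod_def by blast
  have hin: "h i m \<in> mcomp (zsimple B j) i" if "m \<in> mcomp (zpsum A js) i" for i m
    using h that unfolding zmod_hom_def by (simp del: zpsum_simps zsimple_simps)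
  have "zker (zpsum A js) (\<lambda>i m. G i (h i m)) = zker (zpsum A js) h"
  proof -
    have "(\<lambda>i. {m \<in> mcomp (zpsum A js) i. G i (h i m) = 0}) = (\<lambda>i. {m \<in> mcomp (zpsum A js) i. h i m = 0})"
    proof (intro ext set_eqI iffI)
      fix i m assume "m \<in> {m \<in> mcomp (zpsum A js) i. G i (h i m) = 0}"
      then show "m \<in> {m \<in> mcomp (zpsum A js) i. h i m = 0}"
        using hin[of m i] Gker[of "h i m" i] by (simp del: zpsum_simps zsimple_simps)
    next
      fix i m assume "m \<in> {m \<in> mcomp (zpsum A js) i. h i m = 0}"
      then show "m \<in> {m \<in> mcomp (zpsum A js) i. G i (h i m) = 0}"
        using hin[of m i] Gker[of "h i m" i] by (simp del: zpsum_simps zsimple_simps)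
    qed
    then show ?thesis unfolding zker_def by simp
  qed
  then show ?thesis using fgk by simp
qed

theorem proposition1p6:
  fixes A :: "('k::field, 'v::ab_group_add) zalg"
    and B :: "('k, 'w::ab_group_add) zalg"
    and f :: "int \<Rightarrow> int \<Rightarrow> 'v \<Rightarrow> 'w"
  assumes "zalgebra A" and "zalgebra B" and "zalg_hom A B f"
    and "coherent_zalg A"
    and "\<forall>j. coherent_mod A (zrestrict f (zproj B j))"
  shows "coherent_zalg B"
proof -
  note zA = assms(1) and zB = assms(2) and f = assms(3)
  have fgQ: "\<forall>j. fin_gen A (zrestrict f (zproj B j))" using assms(5) unfolding coherent_mod_def by blast
  have kerlift: "fin_gen B (zker (zpsum B js) \<phi>)"
    if phi: "zmod_hom B (zpsum B js) N \<phi>" and vN: "vector_space (mscale N)"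
      and N0: "\<And>i j a. a \<in> zcomp B i j \<Longrightarrow> mact N i j 0 a = 0"
      and cohN: "\<forall>js h. zmod_hom A (zpsum A js) (zrestrict f N) h \<longrightarrow> fin_gen A (zker (zpsum A js) h)"
    for js \<phi> and N :: "('k,'w,'w) zmod"
  proof (rule fg_lift[OF zA zB f])
    show "is_zmod B (zker (zpsum B js) \<phi>)"
      by (rule zker_is_zmod[OF zB zpsum_is_zmod[OF zB] vN phi N0])
    have "fin_gen A (zker (zrestrict f (zpsum B js)) \<phi>)"
      by (rule fin_gen_ker[OF zA fg_sum[OF zA zB f fgQ] zrestrict_hom[OF f phi] cohN])
    then show "fin_gen A (zrestrict f (zker (zpsum B js) \<phi>))" by (simp only: zrestrict_zker)
  qed
  have "coherent_mod B (zproj B j)" for j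
    unfolding coherent_mod_def
  proof (intro conjI allI impI)
    show "fin_gen B (zproj B j)"
      by (rule fg_lift[OF zA zB f zproj_is_zmod[OF zB]]) (use fgQ in blast)
    fix js \<phi> assume phi: "zmod_hom B (zpsum B js) (zproj B j) \<phi>"
    show "fin_gen B (zker (zpsum B js) \<phi>)"
      by (rule kerlift[OF phi]) (use za_vs[OF zB] za_mul_0L[OF zB] assms(5) in \<open>auto simp: coherent_mod_def\<close>)
  qed
  moreover have "coherent_mod B (zsimple B j)" for j
    unfolding coherent_mod_def
  proof (intro conjI allI impI)
    show "fin_gen B (zsimple B j)" by (rule fg_simple[OF zB])
    fix js \<phi> assume phi: "zmod_hom B (zpsum B js) (zsimple B j) \<phi>"
    have cohS: "coherent_mod A (zsimple A j)" using assms(4) unfolding coherent_zalg_def by blast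
    show "fin_gen B (zker (zpsum B js) \<phi>)"
      by (rule kerlift[OF phi]) (use za_vs[OF zB] za_mul_0L[OF zB] simple_ker[OF zA zB f cohS] in auto)
  qed
  ultimately show ?thesis unfolding coherent_zalg_def by blast
qed

end
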